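(* Let $k\ge 3$ and consider $k$ processes $P_0,\dots,P_{k-1}$ (with distinct ids $0,\dots,k-1$) with inputs $v_0,\dots,v_{k-1}$, running the following algorithm on a single shared $\text{WRN}_{k}$ object: process $P_i$ performs $t\gets\texttt{WRN}(i,v_i)$ and then decides $t$ if $t\neq\bot$, and decides $v_i$ otherwise. This algorithm solves the $(k-1)$-set consensus task for these $k$ processes (wait-free).
   Context: A $\text{WRN}_{k}$ (Write and Read Next) object is a deterministic atomic shared object with a single operation $\texttt{WRN}(i,v)$, where $i\in\{0,\dots,k-1\}$ and $v\neq\bot$. Its state consists of $k$ values $A[0],\dots,A[k-1]$, initially all $\bot$; the operation $\texttt{WRN}(i,v)$ atomically sets $A[i]\gets v$ and returns $A[(i+1)\bmod k]$. Model: asynchronous shared memory; processes may crash. The $m$-set consensus task: each process has an input and every non-faulty process must output, within a finite number of its own steps, a value such that every output is the input of some process and there are at most $m$ different output values. *)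

theory Defs
  imports Main
begin

text \<open>State of a WRN_k object: k cells A[0..k-1]; None represents bot.\<close>
type_synonym 'a wrn_state = "nat \<Rightarrow> 'a option"

definition wrn :: "nat \<Rightarrow> 'a wrn_state \<Rightarrow> nat \<Rightarrow> 'a \<Rightarrow> 'a wrn_state \<times> 'a option" where
  "wrn k A i v = (A(i := Some v), A ((i + 1) mod k))"

text \<open>One step of process P_i of the algorithm: t <- WRN(i, v_i); decide t if t is not bot,
  else decide v_i. Configuration = (object state, decisions; None = not yet decided).\<close>
definition alg_step :: "nat \<Rightarrow> (nat \<Rightarrow> 'a) \<Rightarrow> 'a wrn_state \<times> (nat \<Rightarrow> 'a option) \<Rightarrow> nat
    \<Rightarrow> 'a wrn_state \<times> (nat \<Rightarrow> 'a option)" where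
  "alg_step k v c i =
     (let (A', t) = wrn k (fst c) i (v i)
      in (A', (snd c)(i := Some (case t of Some x \<Rightarrow> x | None \<Rightarrow> v i))))"

text \<open>An execution is given by a schedule: the list of processes in the order in which they
  perform their (single, atomic) step. Each process takes at most one step (distinct list);
  processes not in the schedule have crashed before taking a step.\<close>
definition alg_run :: "nat \<Rightarrow> (nat \<Rightarrow> 'a) \<Rightarrow> nat list \<Rightarrow> 'a wrn_state \<times> (nat \<Rightarrow> 'a option)" where
  "alg_run k v sched = fold (\<lambda>i c. alg_step k v c i) sched (\<lambda>_. None, \<lambda>_. None)"

definition decisions :: "nat \<Rightarrow> (nat \<Rightarrow> 'a) \<Rightarrow> nat list \<Rightarrow> nat \<Rightarrow> 'a option" where
  "decisions k v sched = snd (alg_run k v sched)"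

end

theory Submission
  imports Defs
begin

lemma run_snoc: "alg_run k v (xs@[i]) = alg_step k v (alg_run k v xs) i"
  by (simp add: alg_run_def)

lemma fst_run: "fst (alg_run k v xs) = (\<lambda>j. if j \<in> set xs then Some (v j) else None)"
proof (induction xs rule: rev_induct)
  case Nil then show ?case by (simp add: alg_run_def)
next
  case (snoc x xs) then show ?case
    by (auto simp: run_snoc alg_step_def wrn_def split: prod.splits)
qed

lemma snd_run_app: "i \<notin> set zs \<Longrightarrow> snd (alg_run k v (ys@zs)) i = snd (alg_run k v ys) i"
proof (induction zs rule: rev_induct)
  case Nil then show ?case by simp
next
  case (snoc x xs) then show ?case
    by (simp add: append_assoc[symmetric] run_snoc del: append_assoc)
       (auto simp: alg_step_def wrn_def split: prod.splits)
qed

lemma snd_run_last: "snd (alg_run k v (ys@[i])) i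
   = Some (if (i+1) mod k \<in> set ys then v ((i+1) mod k) else v i)"
  by (simp add: run_snoc alg_step_def wrn_def fst_run split: prod.splits)

lemma snd_run_none: "snd (alg_run k v xs) i = None \<longleftrightarrow> i \<notin> set xs"
proof (induction xs rule: rev_induct)
  case Nil then show ?case by (simp add: alg_run_def)
next
  case (snoc x xs) then show ?case
    by (auto simp: run_snoc alg_step_def wrn_def split: prod.splits)
qed

lemma snd_run_vals: "snd (alg_run k v xs) i = Some d \<Longrightarrow> d = v i \<or> d = v ((i+1) mod k)"
proof (induction xs arbitrary: d rule: rev_induct)
  case Nil then show ?case by (simp add: alg_run_def)
next
  case (snoc x xs) then show ?case
    by (auto simp: run_snoc alg_step_def wrn_def fst_run split: prod.splits if_splits)
qed

theorem corollary9:
  fixes k :: nat and v :: "nat \<Rightarrow> 'a" and sched :: "nat list"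
  assumes "k \<ge> 3"
    and "distinct sched"
    and "set sched \<subseteq> {..<k}"
  shows "(\<forall>i \<in> set sched. decisions k v sched i \<noteq> None)
       \<and> (\<forall>i d. decisions k v sched i = Some d \<longrightarrow> d \<in> v ` {..<k})
       \<and> finite {d. \<exists>i. decisions k v sched i = Some d}
       \<and> card {d. \<exists>i. decisions k v sched i = Some d} \<le> k - 1"
proof -
  define D where "D = decisions k v sched"
  define g where "g i = the (D i)" for i
  have none: "D i = None \<longleftrightarrow> i \<notin> set sched" for i
    by (simp add: D_def decisions_def snd_run_none)
  have A: "\<forall>i \<in> set sched. D i \<noteq> None" using none by auto
  have B: "\<forall>i d. D i = Some d \<longrightarrow> d \<in> v ` {..<k}"
  proof (intro allI impI)
    fix i d assume h: "D i = Some d"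
    then have "i \<in> set sched" using none by (metis option.distinct(1))
    then have "i < k" using assms(3) by auto
    moreover have "(i+1) mod k < k" using assms(1) by simp
    moreover have "d = v i \<or> d = v ((i+1) mod k)"
      using h snd_run_vals unfolding D_def decisions_def by metis
    ultimately show "d \<in> v ` {..<k}" by blast
  qed
  have S: "{d. \<exists>i. D i = Some d} = g ` set sched"
  proof
    show "{d. \<exists>i. D i = Some d} \<subseteq> g ` set sched"
    proof
      fix d assume "d \<in> {d. \<exists>i. D i = Some d}"
      then obtain i where "D i = Some d" by auto
      moreover then have "i \<in> set sched" using none by (metis option.distinct(1))
      ultimately show "d \<in> g ` set sched" unfolding g_def by force
    qed
  next
    show "g ` set sched \<subseteq> {d. \<exists>i. D i = Some d}"
      using none unfolding g_def by fastforce
  qed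
  have C: "card (g ` set sched) \<le> k - 1"
  proof (cases "set sched = {..<k}")
    case False
    then have "set sched \<subset> {..<k}" using assms(3) by auto
    then have "card (set sched) < k" by (metis card_lessThan finite_lessThan psubset_card_mono)
    then show ?thesis using card_image_le[of "set sched" g] by simp
  next
    case True
    then obtain j0 rest where sch: "sched = j0 # rest"
      using assms(1) by (cases sched) (auto simp: set_eq_iff dest: spec[of _ 0])
    have j0k: "j0 < k" using True sch by auto
    define p where "p = (j0 + k - 1) mod k"
    have pk: "p < k" using assms(1) by (simp add: p_def)
    have pne: "p \<noteq> j0"
    proof (cases j0)
      case 0 then show ?thesis using assms(1) by (simp add: p_def)
    next
      case (Suc m)
      then have "j0 + k - 1 = m + k" by simp
      then have "p = m" using j0k Suc by (simp add: p_def)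
      then show ?thesis using Suc by simp
    qed
    have p1: "(p + 1) mod k = j0"
    proof -
      have "(p + 1) mod k = (j0 + k - 1 + 1) mod k" by (simp add: p_def mod_Suc_eq)
      also have "\<dots> = (j0 + k) mod k" using assms(1) by simp
      finally show ?thesis using j0k by simp
    qed
    have "p \<in> set rest" using True sch pk pne by auto
    then obtain ys zs where rs: "rest = ys @ p # zs" by (meson split_list)
    have pz: "p \<notin> set zs" using assms(2) sch rs by auto
    have "D p = Some (v j0)"
      using snd_run_app[OF pz, of k v "j0 # ys @ [p]"] snd_run_last[of k v "j0 # ys" p] p1
      unfolding D_def decisions_def sch rs by simp
    moreover have "D j0 = Some (v j0)"
    proof -
      have "j0 \<notin> set rest" using assms(2) sch by auto
      then show ?thesis
        using snd_run_app[of j0 rest k v "[j0]"] snd_run_last[of k v "[]" j0]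
        unfolding D_def decisions_def sch by simp
    qed
    ultimately have gp: "g p = g j0" by (simp add: g_def)
    have "g ` set sched = g ` (set sched - {p})"
      using gp pne True j0k pk by auto
    also have "card \<dots> \<le> card (set sched - {p})" by (rule card_image_le) simp
    also have "\<dots> = k - 1" using True pk by simp
    finally show ?thesis .
  qed
  show ?thesis using A B C S unfolding D_def[symmetric] by simp
qed

end
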